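(* Let $S>0$, let $D$ be a finite multiset of items with sizes in $(0,S]$, let $k\ge1$ be an integer and $0<\epsilon\le 1/2$. Call an item large if its size exceeds $\epsilon S$ and small otherwise. Suppose the $k$ copies of all large items are packed into $L$ bins forming a valid partial $k$-times bin packing (each bin of total size at most $S$, no bin containing two copies of the same item). Suppose the $k$ copies of the small items are then inserted one at a time, each into some existing bin in which it fits and which contains no copy of the same item, a new bin being opened only when no such bin exists. Then the total number of bins used is at most $\max\{L,(1+2\epsilon)\,OPT(D_k)+k\}$.
   Context: $D_k$ is the collection of $k$ copies of each item of $D$. A $k$-times bin packing of $D$ assigns all copies in $D_k$ to bins such that each bin has total size at most $S$ and no bin contains two copies of the same item; $OPT(D_k)$ is the minimum number of bins in such a packing. *)

theory Defs
  imports Complex_Main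
begin

text \<open>Items are the elements of a finite index set I (so equal sizes are allowed: D is a multiset
of sizes), with size function s. A bin is a set of items (a bin never contains two copies of
the same item, so it is determined by the set of items of which it holds a copy).\<close>

definition kpacking :: "'a set \<Rightarrow> ('a \<Rightarrow> real) \<Rightarrow> real \<Rightarrow> nat \<Rightarrow> 'a set list \<Rightarrow> bool" where
  "kpacking I s S k Bs \<longleftrightarrow>
     (\<forall>B\<in>set Bs. B \<subseteq> I \<and> sum s B \<le> S) \<and>
     (\<forall>i\<in>I. length (filter (\<lambda>B. i \<in> B) Bs) = k)"

definition OPT :: "'a set \<Rightarrow> ('a \<Rightarrow> real) \<Rightarrow> real \<Rightarrow> nat \<Rightarrow> nat" where
  "OPT I s S k = (LEAST m. \<exists>Bs. length Bs = m \<and> kpacking I s S k Bs)"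

inductive insert_step :: "('a \<Rightarrow> real) \<Rightarrow> real \<Rightarrow> 'a set list \<Rightarrow> 'a \<Rightarrow> 'a set list \<Rightarrow> bool" where
  fit: "j < length Bs \<Longrightarrow> x \<notin> Bs ! j \<Longrightarrow> sum s (Bs ! j) + s x \<le> S \<Longrightarrow>
        insert_step s S Bs x (Bs[j := insert x (Bs ! j)])"
| new: "(\<forall>j<length Bs. x \<in> Bs ! j \<or> sum s (Bs ! j) + s x > S) \<Longrightarrow>
        insert_step s S Bs x (Bs @ [{x}])"

inductive insert_seq :: "('a \<Rightarrow> real) \<Rightarrow> real \<Rightarrow> 'a set list \<Rightarrow> 'a list \<Rightarrow> 'a set list \<Rightarrow> bool" where
  Nil: "insert_seq s S Bs [] Bs"
| Cons: "insert_step s S Bs x Bs' \<Longrightarrow> insert_seq s S Bs' xs Bs'' \<Longrightarrow> insert_seq s S Bs (x # xs) Bs''"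

end

theory Submission
  imports Defs
begin

lemma filt_update:
  "j < length Bs \<Longrightarrow> length (filter P (Bs[j:=B'])) + (if P (Bs!j) then 1 else 0)
     = length (filter P Bs) + (if P B' then 1 else 0)"
proof (induction Bs arbitrary: j)
  case Nil then show ?case by simp
next
  case (Cons a Bs)
  show ?case
  proof (cases j)
    case 0 then show ?thesis by simp
  next
    case (Suc j')
    then have "j' < length Bs" using Cons.prems by simp
    from Cons.IH[OF this] Suc show ?thesis by simp
  qed
qed

lemma mass:
  assumes "finite I" "\<forall>B\<in>set Bs. B \<subseteq> I"
  shows "sum_list (map (sum s) Bs) = (\<Sum>i\<in>I. s i * real (length (filter (\<lambda>B. i\<in>B) Bs)))"
  using assms(2)
proof (induction Bs)
  case Nil then show ?case by simp
next
  case (Cons B Bs)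
  have "sum s B = (\<Sum>i\<in>I. if i \<in> B then s i else 0)"
    using sum.inter_restrict[of I s B] assms(1) Cons.prems
    by (simp add: Int_absorb1)
  then show ?case using Cons by (simp add: sum.distrib[symmetric], intro sum.cong) (auto simp: algebra_simps)
qed

lemma filt_concat:
  "length (filter (\<lambda>B. i\<in>B) (concat (map (\<lambda>j. replicate k {j}) l))) = k * count_list l i"
  by (induction l) auto

lemma count_distinct: "distinct l \<Longrightarrow> i \<in> set l \<Longrightarrow> count_list l i = 1"
  by (induction l) auto

lemma exists_kp:
  assumes "finite I" "\<forall>i\<in>I. s i \<le> S"
  shows "\<exists>Bs. kpacking I s S k Bs"
proof -
  obtain l where l: "set l = I" "distinct l" using finite_distinct_list[OF assms(1)] by blast
  show ?thesis
    apply (rule exI[of _ "concat (map (\<lambda>j. replicate k {j}) l)"])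
    using l assms(2) by (auto simp: kpacking_def filt_concat count_distinct)
qed

lemma opt_bound:
  assumes "finite I" "\<forall>i\<in>I. s i \<le> S"
  shows "real k * sum s I \<le> real (OPT I s S k) * S"
proof -
  have "\<exists>Bs. length Bs = OPT I s S k \<and> kpacking I s S k Bs"
  proof -
    obtain B0 where "kpacking I s S k B0" using exists_kp[OF assms, of k] by blast
    then show ?thesis unfolding OPT_def
      by (intro LeastI[where P="\<lambda>m. \<exists>Bs. length Bs = m \<and> kpacking I s S k Bs" and k="length B0"]) blast
  qed
  then obtain Bs where B: "length Bs = OPT I s S k" "kpacking I s S k Bs" by blast
  have "sum_list (map (sum s) Bs) = (\<Sum>i\<in>I. s i * real k)"
    using mass[OF assms(1), of Bs s] B(2) unfolding kpacking_def by simp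
  also have "\<dots> = real k * sum s I" by (simp add: sum_distrib_left mult.commute)
  finally have 1: "sum_list (map (sum s) Bs) = real k * sum s I" .
  have "sum_list (map (sum s) Bs) \<le> sum_list (map (\<lambda>_. S) Bs)"
    using B(2) unfolding kpacking_def by (intro sum_list_mono) auto
  also have "\<dots> = real (length Bs) * S" by (simp add: sum_list_triv)
  finally show ?thesis using 1 B(1) by simp
qed

lemma new_bound:
  assumes fin: "finite I" and pos: "\<forall>i\<in>I. 0 < s i" and eps: "\<epsilon> \<le> 1/2" and Sp: "S > 0"
    and inv: "\<forall>i. length (filter (\<lambda>B. i\<in>B) Bs) + count_list (x#rest) i = (if i\<in>I then k else 0)"
    and sx: "s x \<le> \<epsilon> * S"
    and full: "\<forall>j<length Bs. x \<in> Bs ! j \<or> sum s (Bs ! j) + s x > S"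
  shows "(real (length Bs) + 1 - real k) * ((1 - \<epsilon>) * S) \<le> real k * sum s I"
proof -
  define m where "m = length Bs"
  define cnt where "cnt i = length (filter (\<lambda>B. i\<in>B) Bs)" for i
  have xI: "x \<in> I" using inv[rule_format, of x] by (auto split: if_splits)
  have sub: "\<forall>B\<in>set Bs. B \<subseteq> I"
  proof (intro ballI subsetI)
    fix B i assume "B \<in> set Bs" "i \<in> B"
    then have "length (filter (\<lambda>B. i\<in>B) Bs) \<noteq> 0" by (auto simp: filter_empty_conv)
    then show "i \<in> I" using inv[rule_format, of i] by (auto split: if_splits)
  qed
  have cntI: "\<forall>i\<in>I. real (cnt i) = real k - real (count_list (x#rest) i)"
    using inv unfolding cnt_def by (metis add_diff_cancel_right' of_nat_add diff_add_cancel add.commute)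
  have M: "sum_list (map (sum s) Bs) = (\<Sum>i\<in>I. s i * real (cnt i))"
    using mass[OF fin sub] unfolding cnt_def by simp
  also have "\<dots> = (\<Sum>i\<in>I. s i * real k) - (\<Sum>i\<in>I. s i * real (count_list (x#rest) i))"
    using cntI by (simp add: sum_subtractf[symmetric] right_diff_distrib)
  also have "(\<Sum>i\<in>I. s i * real k) = real k * sum s I" by (simp add: sum_distrib_left mult.commute)
  finally have M1: "sum_list (map (sum s) Bs) = real k * sum s I - (\<Sum>i\<in>I. s i * real (count_list (x#rest) i))" .
  have "s x * real (count_list (x#rest) x) \<le> (\<Sum>i\<in>I. s i * real (count_list (x#rest) i))"
    using pos xI fin by (intro member_le_sum) auto
  moreover have "s x \<le> s x * real (count_list (x#rest) x)" using pos xI by simp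
  ultimately have M2: "sum_list (map (sum s) Bs) \<le> real k * sum s I - s x" using M1 by linarith
  define C where "C = {j. j < m \<and> x \<in> Bs ! j}"
  define J where "J = {j. j < m \<and> x \<notin> Bs ! j}"
  have cardC: "card C = cnt x" unfolding C_def cnt_def m_def by (simp add: length_filter_conv_card)
  have "C \<union> J = {..<m}" "C \<inter> J = {}" unfolding C_def J_def by auto
  then have cardCJ: "card C + card J = m"
    by (metis card_Un_disjoint card_lessThan finite_Un finite_lessThan)
  have cntx: "cnt x + count_list rest x + 1 = k" using inv[rule_format, of x] xI unfolding cnt_def by simp
  have nonneg: "\<forall>j<m. 0 \<le> sum s (Bs ! j)"
    using sub pos unfolding m_def by (metis (no_types, lifting) less_le nth_mem subset_iff sum_nonneg)
  have "sum_list (map (sum s) Bs) = (\<Sum>j<m. sum s (Bs ! j))"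
    unfolding m_def by (simp add: sum_list_sum_nth atLeast0LessThan)
  also have "\<dots> \<ge> (\<Sum>j\<in>J. sum s (Bs ! j))"
    using nonneg by (intro sum_mono2) (auto simp: J_def)
  moreover have "(\<Sum>j\<in>J. sum s (Bs ! j)) \<ge> (\<Sum>j\<in>J. S - s x)"
    using full unfolding J_def m_def by (intro sum_mono) force
  ultimately have "real (card J) * (S - s x) \<le> real k * sum s I - s x" using M2 by simp
  moreover have "(1 - \<epsilon>) * S \<le> S - s x" using sx by (simp add: algebra_simps)
  moreover have ks: "0 \<le> sum s I" using pos by (meson less_le sum_nonneg)
  moreover have "0 \<le> s x" using pos xI by auto
  ultimately have A: "real (card J) * ((1 - \<epsilon>) * S) \<le> real k * sum s I"
    by (smt (verit, best) mult_left_mono of_nat_0_le_iff)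
  show ?thesis
  proof (cases "m + 1 \<le> k")
    case True
    then have "real (length Bs) + 1 - real k \<le> 0" unfolding m_def by simp
    moreover have "0 \<le> (1 - \<epsilon>) * S" using eps Sp by simp
    ultimately show ?thesis using ks by (smt (verit) mult_nonpos_nonneg of_nat_0_le_iff mult_nonneg_nonneg)
  next
    case False
    then have "real (length Bs) + 1 - real k \<le> real (card J)"
      using cardC cardCJ cntx unfolding m_def by linarith
    moreover have "0 \<le> (1 - \<epsilon>) * S" using eps Sp by simp
    ultimately show ?thesis using A by (smt (verit) mult_right_mono)
  qed
qed


lemma step_inv:
  assumes st: "insert_step s S Bs x Bs1"
    and fin: "finite I" and pos: "\<forall>i\<in>I. 0 < s i" and eps: "\<epsilon> \<le> 1/2" and Sp: "S > 0"
    and inv: "\<forall>i. length (filter (\<lambda>B. i\<in>B) Bs) + count_list (x#rest) i = (if i\<in>I then k else 0)"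
    and sm: "\<forall>y\<in>set (x#rest). s y \<le> \<epsilon> * S"
    and Q: "real (length Bs) \<le> real L \<or> (real (length Bs) - real k) * ((1 - \<epsilon>) * S) \<le> real k * sum s I"
  shows "(\<forall>i. length (filter (\<lambda>B. i\<in>B) Bs1) + count_list rest i = (if i\<in>I then k else 0))
     \<and> (real (length Bs1) \<le> real L \<or> (real (length Bs1) - real k) * ((1 - \<epsilon>) * S) \<le> real k * sum s I)"
  using st
proof cases
  case (fit j)
  have "length (filter (\<lambda>B. i\<in>B) Bs1) + count_list rest i = (if i\<in>I then k else 0)" for i
  proof -
    have u: "length (filter (\<lambda>B. i\<in>B) Bs1) + (if i \<in> Bs!j then 1 else 0)
      = length (filter (\<lambda>B. i\<in>B) Bs) + (if i \<in> insert x (Bs!j) then 1 else 0)"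
      using filt_update[OF fit(2), of "\<lambda>B. i\<in>B" "insert x (Bs!j)"] fit(1) by simp
    show ?thesis using u inv[rule_format, of i] fit(3) by (auto split: if_splits)
  qed
  then show ?thesis using Q fit(1) by simp
next
  case new
  have nb: "(real (length Bs) + 1 - real k) * ((1 - \<epsilon>) * S) \<le> real k * sum s I"
    using new_bound[OF fin pos eps Sp inv _ new(2)] sm by simp
  have "length (filter (\<lambda>B. i\<in>B) Bs1) + count_list rest i = (if i\<in>I then k else 0)" for i
    using new(1) inv[rule_format, of i] by (cases "i = x") auto
  moreover have "(real (length Bs1) - real k) * ((1 - \<epsilon>) * S) \<le> real k * sum s I"
    using new(1) nb by (simp add: algebra_simps)
  ultimately show ?thesis by blast
qed

lemma seq_inv:
  "insert_seq s S Bs rest Bs' \<Longrightarrow> finite I \<Longrightarrow> \<forall>i\<in>I. 0 < s i \<Longrightarrow> \<epsilon> \<le> 1/2 \<Longrightarrow> S > 0 \<Longrightarrow>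
    (\<forall>i. length (filter (\<lambda>B. i\<in>B) Bs) + count_list rest i = (if i\<in>I then k else 0)) \<Longrightarrow>
    (\<forall>y\<in>set rest. s y \<le> \<epsilon> * S) \<Longrightarrow>
    (real (length Bs) \<le> real L \<or> (real (length Bs) - real k) * ((1 - \<epsilon>) * S) \<le> real k * sum s I) \<Longrightarrow>
    (real (length Bs') \<le> real L \<or> (real (length Bs') - real k) * ((1 - \<epsilon>) * S) \<le> real k * sum s I)"
proof (induction rule: insert_seq.induct)
  case (Nil s S Bs)
  then show ?case by simp
next
  case (Cons s S Bs x Bs1 xs Bs2)
  show ?case
    apply (rule Cons.IH)
    using step_inv[OF Cons.hyps(1) Cons.prems(1-7)] Cons.prems by auto
qed

theorem lemma4:
  fixes I :: "'a set" and s :: "'a \<Rightarrow> real" and S \<epsilon> :: real and k L :: nat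
    and Bs0 Bs :: "'a set list" and xs :: "'a list"
  assumes "S > 0" and "finite I" and "\<forall>i\<in>I. 0 < s i \<and> s i \<le> S"
    and "k \<ge> 1" and "0 < \<epsilon>" and "\<epsilon> \<le> 1/2"
    and "length Bs0 = L"
    and "kpacking {i\<in>I. s i > \<epsilon> * S} s S k Bs0"
    and "\<forall>i. count_list xs i = (if i \<in> {i\<in>I. s i \<le> \<epsilon> * S} then k else 0)"
    and "insert_seq s S Bs0 xs Bs"
  shows "real (length Bs) \<le> max (real L) ((1 + 2 * \<epsilon>) * real (OPT I s S k) + real k)"
proof -
  have pos: "\<forall>i\<in>I. 0 < s i" using assms(3) by auto
  have inv0: "\<forall>i. length (filter (\<lambda>B. i\<in>B) Bs0) + count_list xs i = (if i\<in>I then k else 0)"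
  proof
    fix i
    have sub: "\<forall>B\<in>set Bs0. B \<subseteq> {i\<in>I. s i > \<epsilon> * S}" using assms(8) unfolding kpacking_def by auto
    show "length (filter (\<lambda>B. i\<in>B) Bs0) + count_list xs i = (if i\<in>I then k else 0)"
    proof (cases "i \<in> I \<and> s i > \<epsilon> * S")
      case True
      then show ?thesis using assms(8,9) unfolding kpacking_def by auto
    next
      case False
      then have "filter (\<lambda>B. i\<in>B) Bs0 = []" using sub by (auto simp: filter_empty_conv)
      then show ?thesis using assms(9) False by auto
    qed
  qed
  have sm0: "\<forall>y\<in>set xs. s y \<le> \<epsilon> * S"
  proof
    fix y assume "y \<in> set xs"
    then have "count_list xs y \<noteq> 0" by (simp add: count_list_0_iff)
    then show "s y \<le> \<epsilon> * S" using assms(9) by (auto split: if_splits)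
  qed
  have Q: "real (length Bs) \<le> real L \<or> (real (length Bs) - real k) * ((1 - \<epsilon>) * S) \<le> real k * sum s I"
    using seq_inv[OF assms(10) assms(2) pos assms(6) assms(1) inv0 sm0, of L] assms(7) by simp
  have opt: "real k * sum s I \<le> real (OPT I s S k) * S" using opt_bound[OF assms(2)] assms(3) by auto
  show ?thesis
  proof (cases "real (length Bs) \<le> real L")
    case True then show ?thesis by simp
  next
    case False
    define d where "d = real (length Bs) - real k"
    define Op where "Op = real (OPT I s S k)"
    have "d * ((1 - \<epsilon>) * S) \<le> Op * S" using Q False opt unfolding d_def Op_def by linarith
    then have dO: "d * (1 - \<epsilon>) \<le> Op" using assms(1) by (simp add: mult.assoc[symmetric])
    have O0: "0 \<le> Op" unfolding Op_def by simp
    have "d \<le> (1 + 2 * \<epsilon>) * Op"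
    proof (cases "d \<le> 0")
      case True then show ?thesis using O0 assms(5) by (smt (verit) mult_nonneg_nonneg)
    next
      case False
      have "d \<le> d * ((1 + 2 * \<epsilon>) * (1 - \<epsilon>))"
      proof -
        have "(1 + 2 * \<epsilon>) * (1 - \<epsilon>) = 1 + \<epsilon> * (1 - 2 * \<epsilon>)" by (simp add: algebra_simps)
        moreover have "0 \<le> \<epsilon> * (1 - 2 * \<epsilon>)" using assms(5,6) by simp
        moreover have "0 \<le> d * (\<epsilon> * (1 - 2 * \<epsilon>))" using False \<open>0 \<le> \<epsilon> * (1 - 2 * \<epsilon>)\<close> by simp
        ultimately show ?thesis by (simp add: distrib_left)
      qed
      also have "\<dots> = (1 + 2 * \<epsilon>) * (d * (1 - \<epsilon>))" by simp
      also have "\<dots> \<le> (1 + 2 * \<epsilon>) * Op" using dO assms(5) by (intro mult_left_mono) auto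
      finally show ?thesis .
    qed
    then show ?thesis unfolding d_def Op_def by simp
  qed
qed

end
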